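(* Let $X$ be a complex Banach space and $T:X\to X$ a uniformly rigid bounded linear operator. Then $\sigma(T)\subseteq\mathbb T=\{z\in\mathbb C:|z|=1\}$. In particular, $T$ is invertible.
   Context: $T$ is called uniformly rigid if there is an increasing sequence of positive integers $(k_n)$ with $\|T^{k_n}-I\|\to 0$. *)

theory Defs
  imports "HOL-Analysis.Analysis"
begin

class complex_normed_vector = real_normed_vector +
  fixes scaleC :: "complex \<Rightarrow> 'a \<Rightarrow> 'a" (infixr \<open>*\<^sub>C\<close> 75)
  assumes scaleC_add_right: "a *\<^sub>C (x + y) = a *\<^sub>C x + a *\<^sub>C y"
    and scaleC_add_left: "(a + b) *\<^sub>C x = a *\<^sub>C x + b *\<^sub>C x"
    and scaleC_scaleC: "a *\<^sub>C (b *\<^sub>C x) = (a * b) *\<^sub>C x"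
    and scaleC_one: "1 *\<^sub>C x = x"
    and scaleR_scaleC: "scaleR r x = complex_of_real r *\<^sub>C x"
    and norm_scaleC: "norm (a *\<^sub>C x) = cmod a * norm x"

class complex_banach = complex_normed_vector + complete_space

text \<open>Bounded operators are elements of the type of bounded (real-)linear maps,
  required additionally to be complex-linear.\<close>

definition clinear_op :: "('a::complex_normed_vector \<Rightarrow>\<^sub>L 'a) \<Rightarrow> bool" where
  "clinear_op T \<longleftrightarrow> (\<forall>c x. T (c *\<^sub>C x) = c *\<^sub>C T x)"

definition op_pow :: "('a::real_normed_vector \<Rightarrow>\<^sub>L 'a) \<Rightarrow> nat \<Rightarrow> ('a \<Rightarrow>\<^sub>L 'a)" where
  "op_pow T n = ((\<lambda>S. T o\<^sub>L S) ^^ n) id_blinfun"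

definition uniformly_rigid :: "('a::real_normed_vector \<Rightarrow>\<^sub>L 'a) \<Rightarrow> bool" where
  "uniformly_rigid T \<longleftrightarrow>
     (\<exists>k::nat \<Rightarrow> nat. strict_mono k \<and> 0 < k 0 \<and>
        (\<lambda>n. norm (op_pow T (k n) - id_blinfun)) \<longlonglongrightarrow> 0)"

definition invertible_op :: "('a::real_normed_vector \<Rightarrow>\<^sub>L 'a) \<Rightarrow> bool" where
  "invertible_op A \<longleftrightarrow> (\<exists>B. B o\<^sub>L A = id_blinfun \<and> A o\<^sub>L B = id_blinfun)"

definition spectrum :: "('a::complex_normed_vector \<Rightarrow>\<^sub>L 'a) \<Rightarrow> complex set" where
  "spectrum T = {z. \<not> (\<exists>S. bounded_linear S \<and>
      (\<forall>x. S (z *\<^sub>C x - T x) = x) \<and> (\<forall>y. z *\<^sub>C S y - T (S y) = y))}"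

end

theory Submission
  imports Defs
begin

context complex_normed_vector
begin
lemma scaleC_zero_left[simp]: "0 *\<^sub>C x = 0"
proof -
  have "0 *\<^sub>C x = 0 *\<^sub>C x + 0 *\<^sub>C x" using scaleC_add_left[of 0 0 x] by simp
  thus ?thesis by simp
qed
lemma scaleC_zero_right[simp]: "a *\<^sub>C 0 = 0"
proof -
  have "a *\<^sub>C 0 = a *\<^sub>C 0 + a *\<^sub>C 0" using scaleC_add_right[of a 0 0] by simp
  thus ?thesis by simp
qed
lemma scaleC_minus_right: "a *\<^sub>C (- x) = - (a *\<^sub>C x)"
proof -
  have "a *\<^sub>C (- x) + a *\<^sub>C x = 0" using scaleC_add_right[of a "-x" x] by simp
  thus ?thesis by (simp add: eq_neg_iff_add_eq_0)
qed
lemma scaleC_diff_right: "a *\<^sub>C (x - y) = a *\<^sub>C x - a *\<^sub>C y"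
  using scaleC_add_right[of a x "-y"] by (simp add: scaleC_minus_right)
lemma scaleC_minus_left: "(- a) *\<^sub>C x = - (a *\<^sub>C x)"
proof -
  have "(- a) *\<^sub>C x + a *\<^sub>C x = 0" using scaleC_add_left[of "-a" a x] by simp
  thus ?thesis by (simp add: eq_neg_iff_add_eq_0)
qed
lemma scaleC_diff_left: "(a - b) *\<^sub>C x = a *\<^sub>C x - b *\<^sub>C x"
  using scaleC_add_left[of a "-b" x] by (simp add: scaleC_minus_left)
end

lemma bounded_linear_scaleC: "bounded_linear (\<lambda>x::'a::complex_normed_vector. c *\<^sub>C x)"
proof (rule bounded_linear_intro[where K="cmod c"])
  show "c *\<^sub>C (x + y) = c *\<^sub>C x + c *\<^sub>C y" for x y by (simp add: scaleC_add_right)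
  show "c *\<^sub>C (r *\<^sub>R x) = r *\<^sub>R (c *\<^sub>C x)" for r x
    by (simp add: scaleR_scaleC scaleC_scaleC mult.commute)
  show "norm (c *\<^sub>C x) \<le> norm x * cmod c" for x by (simp add: norm_scaleC mult.commute)
qed

lemma near_id_inv:
  fixes f :: "'a::{real_normed_vector,complete_space} \<Rightarrow> 'a"
  assumes bl: "bounded_linear f" and q: "0 \<le> q" "q < 1"
    and h: "\<And>x. norm (f x - x) \<le> q * norm x"
  shows "\<exists>g. bounded_linear g \<and> (\<forall>x. g (f x) = x) \<and> (\<forall>y. f (g y) = y)"
proof -
  interpret f: bounded_linear f by fact
  have low: "(1 - q) * norm x \<le> norm (f x)" for x
  proof -
    have "norm x - norm (f x) \<le> norm (f x - x)"
      by (metis norm_minus_commute norm_triangle_ineq2)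
    also have "\<dots> \<le> q * norm x" by (rule h)
    finally show ?thesis by (simp add: algebra_simps)
  qed
  have inj: "inj f"
  proof (rule injI)
    fix x y assume "f x = f y"
    hence "f (x - y) = 0" by (simp add: f.diff)
    hence "(1 - q) * norm (x - y) \<le> 0" using low[of "x-y"] by simp
    hence "norm (x - y) \<le> 0" using q by (simp add: mult_le_0_iff)
    thus "x = y" by simp
  qed
  have surj: "surj f"
  proof -
    have "\<exists>x. f x = y" for y
    proof -
      let ?h = "\<lambda>x. x - f x + y"
      have "\<forall>x. \<forall>x'. dist (?h x) (?h x') \<le> q * dist x x'"
      proof (intro allI)
        fix x x'
        have "dist (?h x) (?h x') = norm (f (x - x') - (x - x'))"
          by (simp add: dist_norm f.diff norm_minus_commute algebra_simps)
        also have "\<dots> \<le> q * dist x x'" using h[of "x - x'"] by (simp add: dist_norm)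
        finally show "dist (?h x) (?h x') \<le> q * dist x x'" .
      qed
      then obtain x where "?h x = x" using banach_fix_type[OF q, of ?h] by blast
      hence "f x = y" by (simp add: algebra_simps)
      thus ?thesis by blast
    qed
    thus ?thesis by (metis surjI)
  qed
  define g where "g = inv f"
  have gf: "g (f x) = x" for x using inj by (simp add: g_def)
  have fg: "f (g y) = y" for y using surj by (simp add: g_def surj_f_inv_f)
  have "bounded_linear g"
  proof (rule bounded_linear_intro[where K="1 / (1 - q)"])
    show "g (x + y) = g x + g y" for x y
      by (metis f.add fg gf)
    show "g (r *\<^sub>R x) = r *\<^sub>R g x" for r x
      by (metis f.scale fg gf)
    show "norm (g x) \<le> norm x * (1 / (1 - q))" for x
      using low[of "g x"] q by (simp add: fg field_simps)
  qed
  thus ?thesis using gf fg by blast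
qed

lemma op_pow_0[simp]: "blinfun_apply (op_pow T 0) x = x"
  by (simp add: op_pow_def)
lemma op_pow_Suc[simp]: "blinfun_apply (op_pow T (Suc n)) x = T (op_pow T n x)"
  by (simp add: op_pow_def)

lemma op_pow_T: "op_pow T n (T x) = T (op_pow T n x)"
  by (induction n) auto

lemma op_pow_scaleC:
  fixes T :: "'a::complex_normed_vector \<Rightarrow>\<^sub>L 'a"
  assumes "clinear_op T"
  shows "op_pow T n (c *\<^sub>C x) = c *\<^sub>C op_pow T n x"
  using assms by (induction n) (auto simp: clinear_op_def)

fun PP :: "complex \<Rightarrow> ('a::complex_normed_vector \<Rightarrow>\<^sub>L 'a) \<Rightarrow> nat \<Rightarrow> 'a \<Rightarrow> 'a" where
  "PP z T 0 x = 0"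
| "PP z T (Suc k) x = z *\<^sub>C PP z T k x + op_pow T k x"

lemma PP_bl: "bounded_linear (PP z T k)"
proof (induction k)
  case 0
  have "PP z T 0 = (\<lambda>x. 0)" by auto
  thus ?case by (simp add: bounded_linear_zero)
next
  case (Suc k)
  have "bounded_linear (\<lambda>x. z *\<^sub>C PP z T k x)"
    using bounded_linear_compose[OF bounded_linear_scaleC Suc.IH] by simp
  moreover have "bounded_linear (\<lambda>x. blinfun_apply (op_pow T k) x)"
    by (rule blinfun.bounded_linear_right)
  ultimately show ?case by (simp add: bounded_linear_add)
qed

lemma PP_comm:
  fixes T :: "'a::complex_normed_vector \<Rightarrow>\<^sub>L 'a"
  assumes "clinear_op T"
  shows "PP z T k (z *\<^sub>C x - T x) = z *\<^sub>C PP z T k x - T (PP z T k x)"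
proof (induction k)
  case 0 show ?case by simp
next
  case (Suc k)
  have cl: "T (c *\<^sub>C y) = c *\<^sub>C T y" for c y using assms by (simp add: clinear_op_def)
  show ?case
    by (simp add: Suc.IH op_pow_scaleC[OF assms] op_pow_T blinfun.diff_right blinfun.add_right
        cl scaleC_diff_right scaleC_add_right algebra_simps)
qed

lemma PP_tele:
  fixes T :: "'a::complex_normed_vector \<Rightarrow>\<^sub>L 'a"
  assumes "clinear_op T"
  shows "z ^ k *\<^sub>C x - op_pow T k x = PP z T k (z *\<^sub>C x - T x)"
proof (induction k)
  case 0 show ?case by (simp add: scaleC_one)
next
  case (Suc k)
  have "PP z T (Suc k) (z *\<^sub>C x - T x) = z *\<^sub>C (z ^ k *\<^sub>C x - op_pow T k x)
       + (z *\<^sub>C op_pow T k x - op_pow T (Suc k) x)"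
    by (simp add: Suc.IH[symmetric] op_pow_scaleC[OF assms] op_pow_T blinfun.diff_right)
  also have "\<dots> = z ^ Suc k *\<^sub>C x - op_pow T (Suc k) x"
    by (simp add: scaleC_diff_right scaleC_scaleC)
  finally show ?case by simp
qed


lemma pow_dist_ge:
  fixes r :: real assumes "0 \<le> r" "1 \<le> K"
  shows "\<bar>r - 1\<bar> \<le> \<bar>r ^ K - 1\<bar>"
proof (cases "1 \<le> r")
  case True
  have "r \<le> r ^ K" using power_increasing[OF assms(2) True] by simp
  thus ?thesis using True by simp
next
  case False
  have "r ^ K \<le> r" using power_decreasing[OF assms(2) assms(1)] False by simp
  thus ?thesis using False assms by (simp add: abs_if)
qed

lemma not_in_spectrum:
  fixes T :: "'a::complex_banach \<Rightarrow>\<^sub>L 'a"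
  assumes cl: "clinear_op T" and ur: "uniformly_rigid T" and z: "cmod z \<noteq> 1"
  shows "\<exists>S. bounded_linear S \<and> (\<forall>x. S (z *\<^sub>C x - T x) = x) \<and> (\<forall>y. z *\<^sub>C S y - T (S y) = y)"
proof -
  obtain k :: "nat \<Rightarrow> nat" where sm: "strict_mono k" and k0: "0 < k 0"
    and lim: "(\<lambda>n. norm (op_pow T (k n) - id_blinfun)) \<longlonglongrightarrow> 0"
    using ur unfolding uniformly_rigid_def by blast
  define \<delta> where "\<delta> = \<bar>cmod z - 1\<bar>"
  have dpos: "\<delta> > 0" using z by (simp add: \<delta>_def)
  obtain n where nE: "norm (op_pow T (k n) - id_blinfun) < \<delta>"
    using LIMSEQ_D[OF lim dpos] by auto
  define K where "K = k n"
  have K1: "1 \<le> K" using k0 sm unfolding K_def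
    using strict_mono_leD[OF sm, of 0 n] by simp
  define c where "c = z ^ K - 1"
  have "\<delta> \<le> \<bar>cmod z ^ K - 1\<bar>" unfolding \<delta>_def by (rule pow_dist_ge[OF _ K1]) simp
  also have "\<dots> \<le> cmod c" unfolding c_def
    using norm_triangle_ineq3[of "z ^ K" 1] by (simp add: norm_power)
  finally have dc: "\<delta> \<le> cmod c" .
  have c0: "c \<noteq> 0" using dc dpos by auto
  define E where "E = op_pow T K - id_blinfun"
  have En: "norm E < cmod c" using nE dc unfolding E_def K_def by simp
  define W where "W x = z ^ K *\<^sub>C x - op_pow T K x" for x
  define f where "f x = (1 / c) *\<^sub>C W x" for x
  define q where "q = norm E / cmod c"
  have q: "0 \<le> q" "q < 1" using En c0 by (auto simp: q_def)
  have blW: "bounded_linear W" unfolding W_def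
    by (intro bounded_linear_sub bounded_linear_scaleC blinfun.bounded_linear_right)
  have blf: "bounded_linear f" unfolding f_def
    using bounded_linear_compose[OF bounded_linear_scaleC blW] by simp
  have fx: "f x - x = (1 / c) *\<^sub>C (x - op_pow T K x)" for x
  proof -
    have "x = (1 / c) *\<^sub>C (c *\<^sub>C x)" using c0 by (simp add: scaleC_scaleC scaleC_one)
    hence "f x - x = (1 / c) *\<^sub>C (W x - c *\<^sub>C x)"
      unfolding f_def by (metis scaleC_diff_right)
    also have "W x - c *\<^sub>C x = x - op_pow T K x"
      unfolding W_def c_def by (simp add: scaleC_diff_left scaleC_one)
    finally show ?thesis .
  qed
  have hf: "norm (f x - x) \<le> q * norm x" for x
  proof -
    have "norm (f x - x) = norm (E x) / cmod c"
      unfolding fx norm_scaleC E_def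
      by (simp add: blinfun.diff_left norm_minus_commute norm_divide)
    also have "\<dots> \<le> norm E * norm x / cmod c"
      by (intro divide_right_mono norm_blinfun) simp
    finally show ?thesis by (simp add: q_def)
  qed
  obtain g where blg: "bounded_linear g" and gf: "\<And>x. g (f x) = x" and fg: "\<And>y. f (g y) = y"
    using near_id_inv[OF blf q hf] by blast
  have Wf: "W u = c *\<^sub>C f u" for u
    using c0 by (simp add: f_def scaleC_scaleC scaleC_one)
  define A where "A x = z *\<^sub>C x - T x" for x
  have WA1: "W x = PP z T K (A x)" for x unfolding W_def A_def using PP_tele[OF cl] by simp
  have WA2: "W x = A (PP z T K x)" for x unfolding WA1 A_def using PP_comm[OF cl] by simp
  define S where "S y = PP z T K (g ((1 / c) *\<^sub>C y))" for y
  define S' where "S' y = g ((1 / c) *\<^sub>C PP z T K y)" for y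
  have AS: "A (S y) = y" for y
    unfolding S_def WA2[symmetric] Wf fg using c0 by (simp add: scaleC_scaleC scaleC_one)
  have SA': "S' (A x) = x" for x
    unfolding S'_def WA1[symmetric] by (simp add: f_def[symmetric] gf)
  have SA: "S (A x) = x" for x
  proof -
    have "S (A x) = S' (A (S (A x)))" using SA' by simp
    also have "\<dots> = S' (A x)" using AS by simp
    also have "\<dots> = x" using SA' by simp
    finally show ?thesis .
  qed
  have blS: "bounded_linear S" unfolding S_def
    using bounded_linear_compose[OF PP_bl bounded_linear_compose[OF blg bounded_linear_scaleC]] by simp
  show ?thesis using blS SA AS unfolding A_def by blast
qed

theorem proposition2p19:
  fixes T :: "'a::complex_banach \<Rightarrow>\<^sub>L 'a"
  assumes "clinear_op T"
    and "uniformly_rigid T"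
  shows "spectrum T \<subseteq> sphere 0 1 \<and> invertible_op T"
proof
  show "spectrum T \<subseteq> sphere 0 1"
  proof
    fix z assume "z \<in> spectrum T"
    hence "cmod z = 1" using not_in_spectrum[OF assms, of z] unfolding spectrum_def by blast
    thus "z \<in> sphere 0 1" by simp
  qed
  obtain S where blS: "bounded_linear S" and S1: "\<And>x. S (0 *\<^sub>C x - T x) = x"
    and S2: "\<And>y. 0 *\<^sub>C S y - T (S y) = y"
    using not_in_spectrum[OF assms, of 0] by auto
  interpret S: bounded_linear S by fact
  define B where "B = - Blinfun S"
  have B: "blinfun_apply B y = - S y" for y
    unfolding B_def using blS by (simp add: uminus_blinfun.rep_eq bounded_linear_Blinfun_apply)
  have "B o\<^sub>L T = id_blinfun"
    by (rule blinfun_eqI) (simp add: B linear_neg[OF bounded_linear.linear[OF blS], symmetric] S1[simplified])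
  moreover have "T o\<^sub>L B = id_blinfun"
    by (rule blinfun_eqI) (simp add: B blinfun.minus_right S2[simplified])
  ultimately show "invertible_op T" unfolding invertible_op_def by blast
qed

end
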